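(* Let $K_n$ ($n\ge1$) and $K$ be unconstrained Sierpinski carpets with the same $k,N$, generated by $\{\Psi_{n,i}\}_{i=1}^N$ and $\{\Psi_i\}_{i=1}^N$ respectively. (a) If $\Psi_{n,i}\to\Psi_i$ for each $1\le i\le N$ (in the finite-dimensional linear space of affine maps), then $K_n\to K$ in the Hausdorff metric. (b) Conversely, if $K_n\to K$ in the Hausdorff metric, then after reordering $\{\Psi_{n,i}\}_{i=1}^N$ for each $n$, one has $\Psi_{n,i}\to\Psi_i$ for each $1\le i\le N$.
   Context: USC: integers $k\ge3$, $4(k-1)\le N\le k^2-1$; maps $\Psi_i(x)=x/k+c_i$ on $\square=[0,1]^2$ with pairwise intersections of the $\Psi_i(\square)$ a segment, point or empty, $\bigcup_i\Psi_i(\square)$ connected and invariant under the 8 isometries of $\square$, $[0,1]\times\{0\}\subset\bigcup_i\Psi_i(\square)\subset\square$; $K=\bigcup_i\Psi_iK$. *)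

theory Defs
  imports "HOL-Analysis.Analysis"
begin

type_synonym pt = "real \<times> real"

definition unit_square :: "pt set" where
  "unit_square = cbox (0,0) (1,1)"

definition usc_map :: "nat \<Rightarrow> (nat \<Rightarrow> pt) \<Rightarrow> nat \<Rightarrow> pt \<Rightarrow> pt" where
  "usc_map k c i x = scaleR (1 / real k) x + c i"

definition square_isometries :: "(pt \<Rightarrow> pt) set" where
  "square_isometries =
     { (\<lambda>(x,y). (x,y)), (\<lambda>(x,y). (1-x,y)), (\<lambda>(x,y). (x,1-y)), (\<lambda>(x,y). (1-x,1-y)),
       (\<lambda>(x,y). (y,x)), (\<lambda>(x,y). (1-y,x)), (\<lambda>(x,y). (y,1-x)), (\<lambda>(x,y). (1-y,1-x)) }"

definition usc_cells :: "nat \<Rightarrow> nat \<Rightarrow> (nat \<Rightarrow> pt) \<Rightarrow> pt set" where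
  "usc_cells k N c = (\<Union>i<N. usc_map k c i ` unit_square)"

definition usc_ifs :: "nat \<Rightarrow> nat \<Rightarrow> (nat \<Rightarrow> pt) \<Rightarrow> bool" where
  "usc_ifs k N c \<longleftrightarrow>
     k \<ge> 3 \<and> 4 * (k - 1) \<le> N \<and> N \<le> k\<^sup>2 - 1 \<and>
     (\<forall>i<N. \<forall>j<N. i \<noteq> j \<longrightarrow>
        (let S = usc_map k c i ` unit_square \<inter> usc_map k c j ` unit_square in
           S = {} \<or> (\<exists>p. S = {p}) \<or> (\<exists>a b. a \<noteq> b \<and> S = closed_segment a b))) \<and>
     connected (usc_cells k N c) \<and>
     (\<forall>g\<in>square_isometries. g ` usc_cells k N c = usc_cells k N c) \<and>
     {0..1} \<times> {0} \<subseteq> usc_cells k N c \<and>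
     usc_cells k N c \<subseteq> unit_square"

definition usc_attractor :: "nat \<Rightarrow> nat \<Rightarrow> (nat \<Rightarrow> pt) \<Rightarrow> pt set \<Rightarrow> bool" where
  "usc_attractor k N c K \<longleftrightarrow>
     K \<noteq> {} \<and> compact K \<and> K = (\<Union>i<N. usc_map k c i ` K)"

definition hausdist :: "pt set \<Rightarrow> pt set \<Rightarrow> real" where
  "hausdist A B = max (SUP a\<in>A. infdist a B) (SUP b\<in>B. infdist b A)"

end

theory Submission
  imports Defs
begin

lemma usc_map_eq: "usc_map k c i x = (1 / real k) *\<^sub>R x + c i"
  by (simp add: usc_map_def)

lemma unit_square_mem: "x \<in> unit_square \<longleftrightarrow> 0 \<le> fst x \<and> fst x \<le> 1 \<and> 0 \<le> snd x \<and> snd x \<le> 1"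
  by (cases x) (auto simp: unit_square_def cbox_Pair_eq)

lemma cell_mem:
  assumes "k > 0"
  shows "p \<in> usc_map k c i ` unit_square \<longleftrightarrow>
     fst (c i) \<le> fst p \<and> fst p \<le> fst (c i) + 1/real k \<and> snd (c i) \<le> snd p \<and> snd p \<le> snd (c i) + 1/real k"
proof
  assume "p \<in> usc_map k c i ` unit_square"
  then obtain x where x: "x \<in> unit_square" "p = (1 / real k) *\<^sub>R x + c i"
    by (auto simp: usc_map_eq)
  then show "fst (c i) \<le> fst p \<and> fst p \<le> fst (c i) + 1/real k \<and> snd (c i) \<le> snd p \<and> snd p \<le> snd (c i) + 1/real k"
    using assms by (auto simp: unit_square_mem divide_simps)
next
  assume h: "fst (c i) \<le> fst p \<and> fst p \<le> fst (c i) + 1/real k \<and> snd (c i) \<le> snd p \<and> snd p \<le> snd (c i) + 1/real k"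
  define x where "x = real k *\<^sub>R (p - c i)"
  have "p = usc_map k c i x" using assms by (simp add: usc_map_eq x_def)
  moreover have "x \<in> unit_square" using h assms
    by (auto simp: unit_square_mem x_def field_simps)
  ultimately show "p \<in> usc_map k c i ` unit_square" by blast
qed

lemma ifs_k: "usc_ifs k N c \<Longrightarrow> k \<ge> 3 \<and> N \<ge> 1"
  unfolding usc_ifs_def by auto

lemma ifs_bounds:
  assumes "usc_ifs k N c" "i < N"
  shows "0 \<le> fst (c i) \<and> fst (c i) \<le> 1 - 1/real k \<and> 0 \<le> snd (c i) \<and> snd (c i) \<le> 1 - 1/real k"
proof -
  have k: "k > 0" using ifs_k[OF assms(1)] by auto
  have sub: "usc_map k c i ` unit_square \<subseteq> unit_square"
    using assms unfolding usc_ifs_def usc_cells_def by blast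
  have "c i \<in> usc_map k c i ` unit_square" by (subst cell_mem[OF k]) (simp add: k)
  moreover have "c i + (1/real k, 1/real k) \<in> usc_map k c i ` unit_square"
    by (subst cell_mem[OF k]) (simp add: k)
  ultimately have "c i \<in> unit_square" "c i + (1/real k, 1/real k) \<in> unit_square" using sub by auto
  then show ?thesis by (auto simp: unit_square_mem)
qed

lemma ifs_sep:
  assumes "usc_ifs k N c" "i < N" "j < N" "i \<noteq> j"
  shows "1/real k \<le> \<bar>fst (c i) - fst (c j)\<bar> \<or> 1/real k \<le> \<bar>snd (c i) - snd (c j)\<bar>"
proof (rule ccontr)
  assume neg: "\<not> ?thesis"
  have k: "k > 0" using ifs_k[OF assms(1)] by auto
  define S where "S = usc_map k c i ` unit_square \<inter> usc_map k c j ` unit_square"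
  define a1 where "a1 = max (fst (c i)) (fst (c j))"
  define b1 where "b1 = min (fst (c i)) (fst (c j)) + 1/real k"
  define a2 where "a2 = max (snd (c i)) (snd (c j))"
  define b2 where "b2 = min (snd (c i)) (snd (c j)) + 1/real k"
  have lt: "a1 < b1" "a2 < b2" using neg unfolding a1_def b1_def a2_def b2_def by auto
  have box: "{a1<..<b1} \<times> {a2<..<b2} \<subseteq> S"
  proof
    fix p assume "p \<in> {a1<..<b1} \<times> {a2<..<b2}"
    then show "p \<in> S" unfolding S_def using k
      by (cases p) (auto simp: cell_mem a1_def b1_def a2_def b2_def)
  qed
  have "open ({a1<..<b1} \<times> {a2<..<b2})" by (intro open_Times) auto
  then have "{a1<..<b1} \<times> {a2<..<b2} \<subseteq> interior S" using box interior_maximal by blast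
  moreover have "((a1+b1)/2, (a2+b2)/2) \<in> {a1<..<b1} \<times> {a2<..<b2}" using lt by auto
  ultimately have ne: "interior S \<noteq> {}" by blast
  have "S = {} \<or> (\<exists>p. S = {p}) \<or> (\<exists>a b. a \<noteq> b \<and> S = closed_segment a b)"
    using assms unfolding usc_ifs_def S_def Let_def by blast
  moreover have "interior (closed_segment a b) = {}" for a b :: pt
    by (rule interior_closed_segment_ge2) simp
  ultimately show False using ne by auto
qed

lemma ifs_corners:
  assumes "usc_ifs k N c"
  shows "\<exists>i<N. c i = 0" "\<exists>j<N. c j = (1 - 1/real k, 1 - 1/real k)"
proof -
  have k: "k > 0" using ifs_k[OF assms(1)] by auto
  have bot: "{0..1} \<times> {0} \<subseteq> usc_cells k N c" using assms unfolding usc_ifs_def by blast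
  have "(0,0) \<in> usc_cells k N c" using bot by auto
  then obtain i where i: "i < N" "(0,0) \<in> usc_map k c i ` unit_square"
    unfolding usc_cells_def by blast
  then show "\<exists>i<N. c i = 0" using ifs_bounds[OF assms i(1)] cell_mem[OF k]
    by (intro exI[of _ i]) (auto simp: prod_eq_iff)
  define g :: "pt \<Rightarrow> pt" where "g = (\<lambda>(x,y). (x,1-y))"
  have "g \<in> square_isometries" unfolding g_def square_isometries_def by blast
  then have "g ` usc_cells k N c = usc_cells k N c" using assms unfolding usc_ifs_def by blast
  moreover have "(1,0) \<in> usc_cells k N c" using bot by auto
  ultimately have "g (1,0) \<in> usc_cells k N c" by blast
  then have "(1,1) \<in> usc_cells k N c" by (simp add: g_def)
  then obtain j where j: "j < N" "(1,1) \<in> usc_map k c j ` unit_square"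
    unfolding usc_cells_def by blast
  then show "\<exists>j<N. c j = (1 - 1/real k, 1 - 1/real k)" using ifs_bounds[OF assms j(1)] cell_mem[OF k]
    by (intro exI[of _ j]) (auto simp: prod_eq_iff)
qed

lemma usc_dist:
  "dist (usc_map k c i x) (usc_map k d j y) \<le> dist x y / real k + dist (c i) (d j)"
proof -
  have "usc_map k c i x - usc_map k d j y = (1/real k) *\<^sub>R (x - y) + (c i - d j)"
    by (simp add: usc_map_eq algebra_simps)
  then have "norm (usc_map k c i x - usc_map k d j y) \<le> norm ((1/real k) *\<^sub>R (x - y)) + norm (c i - d j)"
    by (metis norm_triangle_ineq)
  then show ?thesis by (simp add: dist_norm)
qed

lemma usc_dist_eq:
  "dist (usc_map k c i x) (usc_map k c i y) = dist x y / real k"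
proof -
  have "usc_map k c i x - usc_map k c i y = (1/real k) *\<^sub>R (x - y)"
    by (simp add: usc_map_eq algebra_simps)
  then show ?thesis by (simp add: dist_norm)
qed

lemma att_fix:
  assumes "usc_attractor k N c K" "k \<ge> 2" "i < N" "usc_map k c i p = p"
  shows "p \<in> K"
proof -
  have K: "compact K" "K \<noteq> {}" and eq: "K = (\<Union>i<N. usc_map k c i ` K)"
    using assms(1) unfolding usc_attractor_def by auto
  obtain z where z: "z \<in> K" "infdist p K = dist p z"
    using infdist_attains_inf[OF compact_imp_closed[OF K(1)] K(2)] by blast
  have "usc_map k c i z \<in> K" using z(1) assms(3) eq by blast
  then have "infdist p K \<le> dist p (usc_map k c i z)" by (rule infdist_le)
  also have "\<dots> = dist p z / real k" using usc_dist_eq[of k c i p z] assms(4) by simp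
  finally have "infdist p K \<le> infdist p K / real k" using z by simp
  moreover have "infdist p K \<ge> 0" by (rule infdist_nonneg)
  ultimately have "infdist p K = 0"
  proof -
    assume a: "infdist p K \<le> infdist p K / real k" "infdist p K \<ge> 0"
    have kk: "real k \<ge> 2" using assms(2) by simp
    have "infdist p K * real k \<le> infdist p K" using a(1) kk by (simp add: le_divide_eq)
    then have "infdist p K * (real k - 1) \<le> 0" by (simp add: algebra_simps)
    then show ?thesis using a(2) kk by (simp add: mult_le_0_iff)
  qed
  then show ?thesis using in_closed_iff_infdist_zero[OF compact_imp_closed[OF K(1)] K(2)] by simp
qed

lemma att_bound:
  assumes "usc_attractor k N c K" "k \<ge> 2" "bounded_linear f"
    and "\<And>i. i < N \<Longrightarrow> f (c i) \<le> (1 - 1/real k) * B" "x \<in> K"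
  shows "f x \<le> B"
proof -
  have K: "compact K" "K \<noteq> {}" and eq: "K = (\<Union>i<N. usc_map k c i ` K)"
    using assms(1) unfolding usc_attractor_def by auto
  have "continuous_on K f" using assms(3) linear_continuous_on by blast
  then obtain p where p: "p \<in> K" "\<And>y. y \<in> K \<Longrightarrow> f y \<le> f p"
    using continuous_attains_sup[OF K(1) K(2)] by blast
  obtain i y where iy: "i < N" "y \<in> K" "p = usc_map k c i y" using p(1) eq by blast
  have "f p = (1/real k) * f y + f (c i)"
    using iy(3) bounded_linear.linear[OF assms(3)] by (simp add: usc_map_eq linear_add linear_scale)
  also have "\<dots> \<le> (1/real k) * f p + (1 - 1/real k) * B"
    using p(2)[OF iy(2)] assms(4)[OF iy(1)] assms(2) by (intro add_mono mult_left_mono) auto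
  finally have "(1 - 1/real k) * f p \<le> (1 - 1/real k) * B" by (simp add: algebra_simps)
  moreover have "1 - 1/real k > 0" using assms(2) by (simp add: field_simps)
  ultimately have "f p \<le> B" by simp
  then show ?thesis using p(2)[OF assms(5)] by simp
qed

lemma att_box:
  assumes "usc_ifs k N c" "usc_attractor k N c K"
  shows "K \<subseteq> unit_square"
proof
  fix x assume x: "x \<in> K"
  have k: "k \<ge> 2" using ifs_k[OF assms(1)] by auto
  have b: "\<And>i. i < N \<Longrightarrow> 0 \<le> fst (c i) \<and> fst (c i) \<le> 1 - 1/real k \<and> 0 \<le> snd (c i) \<and> snd (c i) \<le> 1 - 1/real k"
    using ifs_bounds[OF assms(1)] by blast
  have "fst x \<le> 1" by (rule att_bound[OF assms(2) k bounded_linear_fst _ x]) (use b in auto)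
  moreover have "snd x \<le> 1" by (rule att_bound[OF assms(2) k bounded_linear_snd _ x]) (use b in auto)
  moreover have "- fst x \<le> 0" by (rule att_bound[OF assms(2) k bounded_linear_minus[OF bounded_linear_fst] _ x]) (use b in auto)
  moreover have "- snd x \<le> 0" by (rule att_bound[OF assms(2) k bounded_linear_minus[OF bounded_linear_snd] _ x]) (use b in auto)
  ultimately show "x \<in> unit_square" by (simp add: unit_square_mem)
qed

lemma hd_bdd:
  assumes "compact A"
  shows "bdd_above ((\<lambda>a. infdist a B) ` A)"
proof -
  have "continuous_on A (\<lambda>a. infdist a B)" by (intro continuous_intros)
  then have "compact ((\<lambda>a. infdist a B) ` A)" using assms by (rule compact_continuous_image)
  then show ?thesis by (intro bounded_imp_bdd_above compact_imp_bounded)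
qed

lemma hd_ge1:
  assumes "compact A" "a \<in> A"
  shows "infdist a B \<le> hausdist A B"
proof -
  have "infdist a B \<le> (SUP a\<in>A. infdist a B)" using hd_bdd[OF assms(1)] assms(2) by (rule cSUP_upper2) simp
  then show ?thesis unfolding hausdist_def by linarith
qed

lemma hd_ge2:
  assumes "compact B" "b \<in> B"
  shows "infdist b A \<le> hausdist A B"
proof -
  have "infdist b A \<le> (SUP b\<in>B. infdist b A)" using hd_bdd[OF assms(1)] assms(2) by (rule cSUP_upper2) simp
  then show ?thesis unfolding hausdist_def by linarith
qed

lemma hd_le:
  assumes "A \<noteq> {}" "B \<noteq> {}" "\<And>a. a \<in> A \<Longrightarrow> infdist a B \<le> e" "\<And>b. b \<in> B \<Longrightarrow> infdist b A \<le> e"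
  shows "hausdist A B \<le> e"
proof -
  have "(SUP a\<in>A. infdist a B) \<le> e" using assms(1,3) by (rule cSUP_least)
  moreover have "(SUP b\<in>B. infdist b A) \<le> e" using assms(2,4) by (rule cSUP_least)
  ultimately show ?thesis unfolding hausdist_def by simp
qed

lemma attr_close:
  assumes "usc_attractor k N c K" "usc_attractor k N d L" "k \<ge> 2"
  shows "hausdist L K \<le> (real k / (real k - 1)) * (\<Sum>i<N. dist (d i) (c i))"
proof -
  have K: "compact K" "K \<noteq> {}" and eqK: "K = (\<Union>i<N. usc_map k c i ` K)"
    using assms(1) unfolding usc_attractor_def by auto
  have L: "compact L" "L \<noteq> {}" and eqL: "L = (\<Union>i<N. usc_map k d i ` L)"
    using assms(2) unfolding usc_attractor_def by auto
  define h where "h = hausdist L K"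
  define e where "e = (\<Sum>i<N. dist (d i) (c i))"
  have de: "dist (d i) (c i) \<le> e" if "i < N" for i
    unfolding e_def using that by (intro member_le_sum) auto
  have "h \<le> h / real k + e" unfolding h_def
  proof (rule hd_le[OF L(2) K(2)])
    fix a assume "a \<in> L"
    then obtain i y where iy: "i < N" "y \<in> L" "a = usc_map k d i y" using eqL by blast
    obtain z where z: "z \<in> K" "infdist y K = dist y z"
      using infdist_attains_inf[OF compact_imp_closed[OF K(1)] K(2)] by blast
    have "usc_map k c i z \<in> K" using z(1) iy(1) eqK by blast
    then have "infdist a K \<le> dist a (usc_map k c i z)" by (rule infdist_le)
    also have "\<dots> \<le> dist y z / real k + dist (d i) (c i)" using iy(3) usc_dist by simp
    also have "\<dots> \<le> hausdist L K / real k + e"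
      using hd_ge1[OF L(1) iy(2), of K] z(2) de[OF iy(1)] by (intro add_mono divide_right_mono) auto
    finally show "infdist a K \<le> hausdist L K / real k + e" .
  next
    fix b assume "b \<in> K"
    then obtain i z where iz: "i < N" "z \<in> K" "b = usc_map k c i z" using eqK by blast
    obtain y where y: "y \<in> L" "infdist z L = dist z y"
      using infdist_attains_inf[OF compact_imp_closed[OF L(1)] L(2)] by blast
    have "usc_map k d i y \<in> L" using y(1) iz(1) eqL by blast
    then have "infdist b L \<le> dist b (usc_map k d i y)" by (rule infdist_le)
    also have "\<dots> \<le> dist z y / real k + dist (c i) (d i)" using iz(3) usc_dist by simp
    also have "\<dots> \<le> hausdist L K / real k + e"
      using hd_ge2[OF K(1) iz(2), of L] y(2) de[OF iz(1)] by (intro add_mono divide_right_mono) (auto simp: dist_commute)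
    finally show "infdist b L \<le> hausdist L K / real k + e" .
  qed
  then have "h * real k \<le> h + e * real k" using assms(3) by (simp add: divide_simps)
  then have "h * (real k - 1) \<le> e * real k" by (simp add: algebra_simps)
  then have "h \<le> e * real k / (real k - 1)" using assms(3) by (simp add: divide_simps)
  then show ?thesis unfolding h_def e_def by (simp add: field_simps)
qed

lemma rigid_half:
  fixes K C D :: "pt set" and s :: real and e :: pt
  assumes s: "0 < s" "s < 1"
    and Kbox: "K \<subseteq> unit_square"
    and pts: "\<And>m. (s^m, s^m) \<in> K"
    and finC: "finite C"
    and eqC: "K = (\<Union>c\<in>C. (\<lambda>x. s *\<^sub>R x + c) ` K)"
    and eqD: "K = (\<Union>d\<in>D. (\<lambda>x. s *\<^sub>R x + d) ` K)"
    and sepD: "\<forall>a\<in>D. \<forall>b\<in>D. a \<noteq> b \<longrightarrow> s \<le> \<bar>fst a - fst b\<bar> \<or> s \<le> \<bar>snd a - snd b\<bar>"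
    and e: "e \<in> D" "e \<notin> C"
    and small: "\<forall>c\<in>C. fst c + snd c < fst e + snd e \<longrightarrow> c \<in> D"
  shows False
proof -
  define g where "g c = max (fst c - fst e) (snd c - snd e)" for c
  have lim: "(\<lambda>m. s ^ Suc m) \<longlonglongrightarrow> 0"
    using LIMSEQ_power_zero[of s] s LIMSEQ_Suc[of "\<lambda>m. s^m"] by simp
  have "\<forall>\<^sub>F m in sequentially. \<forall>c\<in>C. \<not> (fst c \<le> fst e \<and> snd c \<le> snd e) \<longrightarrow> s ^ Suc m < g c"
  proof (rule eventually_ball_finite[OF finC], intro ballI)
    fix c assume "c \<in> C"
    show "\<forall>\<^sub>F m in sequentially. \<not> (fst c \<le> fst e \<and> snd c \<le> snd e) \<longrightarrow> s ^ Suc m < g c"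
    proof (cases "fst c \<le> fst e \<and> snd c \<le> snd e")
      case True then show ?thesis by simp
    next
      case False
      then have "g c > 0" unfolding g_def by auto
      from order_tendstoD(2)[OF lim this] show ?thesis by (rule eventually_mono) simp
    qed
  qed
  then obtain m where m: "\<forall>c\<in>C. \<not> (fst c \<le> fst e \<and> snd c \<le> snd e) \<longrightarrow> s ^ Suc m < g c"
    unfolding eventually_sequentially by blast
  define p where "p = s *\<^sub>R (s^m, s^m) + e"
  have "p \<in> K" unfolding p_def using pts[of m] e(1) eqD by blast
  then obtain c y where cy: "c \<in> C" "y \<in> K" "p = s *\<^sub>R y + c" using eqC by blast
  have y: "0 \<le> fst y" "fst y \<le> 1" "0 \<le> snd y" "snd y \<le> 1" using cy(2) Kbox by (auto simp: unit_square_mem)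
  have f1: "s ^ Suc m + fst e = s * fst y + fst c" and f2: "s ^ Suc m + snd e = s * snd y + snd c"
    using cy(3) unfolding p_def by (auto simp: prod_eq_iff)
  have sp: "s ^ Suc m > 0" using s by simp
  have sy1: "s * fst y \<le> s" "s * fst y \<ge> 0" using y s by (auto intro: mult_left_le)
  have sy2: "s * snd y \<le> s" "s * snd y \<ge> 0" using y s by (auto intro: mult_left_le)
  have le: "fst c \<le> fst e \<and> snd c \<le> snd e"
  proof (rule ccontr)
    assume "\<not> ?thesis"
    then have "s ^ Suc m < g c" using m cy(1) by blast
    then show False using f1 f2 sy1 sy2 unfolding g_def by auto
  qed
  have "c \<noteq> e" using cy(1) e(2) by auto
  then have "fst c + snd c < fst e + snd e" using le by (auto simp: prod_eq_iff)
  then have "c \<in> D" using small cy(1) by blast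
  then have "s \<le> \<bar>fst c - fst e\<bar> \<or> s \<le> \<bar>snd c - snd e\<bar>" using sepD e(1) \<open>c \<noteq> e\<close> by blast
  then show False using f1 f2 sy1 sy2 sp le by auto
qed

lemma rigid:
  fixes K C D :: "pt set" and s :: real
  assumes s: "0 < s" "s < 1"
    and Kbox: "K \<subseteq> unit_square"
    and pts: "\<And>m. (s^m, s^m) \<in> K"
    and fin: "finite C" "finite D"
    and eqC: "K = (\<Union>c\<in>C. (\<lambda>x. s *\<^sub>R x + c) ` K)"
    and eqD: "K = (\<Union>d\<in>D. (\<lambda>x. s *\<^sub>R x + d) ` K)"
    and sepC: "\<forall>a\<in>C. \<forall>b\<in>C. a \<noteq> b \<longrightarrow> s \<le> \<bar>fst a - fst b\<bar> \<or> s \<le> \<bar>snd a - snd b\<bar>"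
    and sepD: "\<forall>a\<in>D. \<forall>b\<in>D. a \<noteq> b \<longrightarrow> s \<le> \<bar>fst a - fst b\<bar> \<or> s \<le> \<bar>snd a - snd b\<bar>"
  shows "C = D"
proof (rule ccontr)
  assume ne: "C \<noteq> D"
  define X where "X = (C - D) \<union> (D - C)"
  define f :: "pt \<Rightarrow> real" where "f x = fst x + snd x" for x
  have finX: "finite X" "X \<noteq> {}" using fin ne unfolding X_def by auto
  have "Min (f ` X) \<in> f ` X" using finX by (intro Min_in) auto
  then obtain e where e: "e \<in> X" "f e = Min (f ` X)" by auto
  have emin: "f e \<le> f x" if "x \<in> X" for x using e(2) finX that by (simp add: Min_le)
  show False
  proof (cases "e \<in> D")
    case True
    then have "e \<notin> C" using e(1) unfolding X_def by auto
    show False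
    proof (rule rigid_half[OF s Kbox pts fin(1) eqC eqD sepD True \<open>e \<notin> C\<close>], intro ballI impI)
      fix c assume "c \<in> C" "fst c + snd c < fst e + snd e"
      then show "c \<in> D" using emin[of c] unfolding X_def f_def by force
    qed
  next
    case False
    then have "e \<in> C" using e(1) unfolding X_def by auto
    show False
    proof (rule rigid_half[OF s Kbox pts fin(2) eqD eqC sepC \<open>e \<in> C\<close> False], intro ballI impI)
      fix c assume "c \<in> D" "fst c + snd c < fst e + snd e"
      then show "c \<in> C" using emin[of c] unfolding X_def f_def by force
    qed
  qed
qed

lemma att_pts:
  assumes "usc_ifs k N c" "usc_attractor k N c K"
  shows "((1/real k)^m, (1/real k)^m) \<in> K"
proof -
  have k: "k \<ge> 3" using ifs_k[OF assms(1)] by auto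
  obtain i0 where i0: "i0 < N" "c i0 = 0" using ifs_corners(1)[OF assms(1)] by blast
  obtain j where j: "j < N" "c j = (1 - 1/real k, 1 - 1/real k)" using ifs_corners(2)[OF assms(1)] by blast
  have eq: "K = (\<Union>i<N. usc_map k c i ` K)" using assms(2) unfolding usc_attractor_def by auto
  have "usc_map k c j (1,1) = (1,1)" using j(2) by (simp add: usc_map_eq)
  then have one: "(1,1) \<in> K" using att_fix[OF assms(2) _ j(1)] k by simp
  show ?thesis
  proof (induction m)
    case 0 then show ?case using one by simp
  next
    case (Suc m)
    have "usc_map k c i0 ((1/real k)^m, (1/real k)^m) \<in> K" using Suc i0(1) eq by blast
    then show ?case using i0(2) by (simp add: usc_map_eq)
  qed
qed

lemma subseq_all:
  fixes f :: "nat \<Rightarrow> nat \<Rightarrow> pt"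
  assumes S: "compact S" and fS: "\<And>n i. i < M \<Longrightarrow> f n i \<in> S"
  shows "\<exists>r d. strict_mono r \<and> (\<forall>i<M. (\<lambda>n. f (r n) i) \<longlonglongrightarrow> d i)"
  using fS
proof (induction M)
  case 0
  then show ?case by (intro exI[of _ id]) (auto simp: strict_mono_def)
next
  case (Suc M)
  then obtain r d where rd: "strict_mono r" "\<forall>i<M. (\<lambda>n. f (r n) i) \<longlonglongrightarrow> d i" by auto
  have "\<forall>n. f (r n) M \<in> S" using Suc.prems by auto
  then obtain l r' where lr: "l \<in> S" "strict_mono r'" "((\<lambda>n. f (r n) M) \<circ> r') \<longlonglongrightarrow> l"
    using seq_compactE[OF compact_imp_seq_compact[OF S]] by metis
  show ?case
  proof (intro exI conjI allI impI)
    show "strict_mono (r \<circ> r')" using rd(1) lr(2) by (rule strict_mono_o)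
    fix i assume "i < Suc M"
    show "(\<lambda>n. f ((r \<circ> r') n) i) \<longlonglongrightarrow> (d(M := l)) i"
    proof (cases "i = M")
      case True then show ?thesis using lr(3) by (simp add: o_def)
    next
      case False
      then have "i < M" using \<open>i < Suc M\<close> by simp
      then have "((\<lambda>n. f (r n) i) \<circ> r') \<longlonglongrightarrow> d i" using rd(2) lr(2) LIMSEQ_subseq_LIMSEQ by blast
      then show ?thesis using False by (simp add: o_def)
    qed
  qed
qed

lemma div_le_self_real: "0 \<le> (a::real) \<Longrightarrow> (1::nat) \<le> k \<Longrightarrow> a / real k \<le> a"
proof -
  assume a: "0 \<le> a" "1 \<le> k"
  then have "a * 1 \<le> a * real k" by (intro mult_left_mono) auto
  then show ?thesis using a by (simp add: divide_le_eq)
qed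

lemma hd_limit_eq:
  fixes K :: "pt set" and L :: "nat \<Rightarrow> pt set" and c' :: "nat \<Rightarrow> nat \<Rightarrow> pt"
  assumes K: "compact K" "K \<noteq> {}" and k: "k \<ge> 1"
    and att: "\<And>n. usc_attractor k N (c' n) (L n)"
    and hd: "(\<lambda>n. hausdist (L n) K) \<longlonglongrightarrow> 0"
    and cl: "\<And>i. i < N \<Longrightarrow> (\<lambda>n. c' n i) \<longlonglongrightarrow> d i"
  shows "K = (\<Union>i<N. usc_map k d i ` K)"
proof -
  define U where "U = (\<Union>i<N. usc_map k d i ` K)"
  have contm: "continuous_on K (usc_map k d i)" for i
    unfolding usc_map_def by (intro continuous_intros)
  have U: "compact U" unfolding U_def
    by (intro compact_UN compact_continuous_image contm K(1)) auto
  define b where "b n = 2 * hausdist (L n) K + (\<Sum>i<N. dist (c' n i) (d i))" for n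
  have b: "b \<longlonglongrightarrow> 0"
  proof -
    have "(\<lambda>n. 2 * hausdist (L n) K + (\<Sum>i<N. dist (c' n i) (d i))) \<longlonglongrightarrow> 2 * 0 + (\<Sum>i<N. 0)"
      by (intro tendsto_add tendsto_mult tendsto_const hd tendsto_sum)
         (use cl in \<open>auto simp: tendsto_dist_iff[symmetric]\<close>)
    then show ?thesis unfolding b_def by simp
  qed
  have Ln: "compact (L n)" "L n \<noteq> {}" "L n = (\<Union>i<N. usc_map k (c' n) i ` L n)" for n
    using att[of n] unfolding usc_attractor_def by auto
  have cd: "dist (c' n i) (d i) \<le> (\<Sum>i<N. dist (c' n i) (d i))" if "i < N" for n i
    using that by (intro member_le_sum) auto
  have kk: "1 / real k \<le> 1" using k by simp
  have hpos: "hausdist (L n) K \<ge> 0" for n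
  proof -
    obtain a where "a \<in> L n" using Ln(2) by blast
    then show ?thesis using hd_ge1[OF Ln(1)] infdist_nonneg order_trans by blast
  qed
  show ?thesis
  proof
    show "K \<subseteq> (\<Union>i<N. usc_map k d i ` K)"
    proof
      fix p assume p: "p \<in> K"
      have bound: "infdist p U \<le> b n" for n
      proof -
        obtain q where q: "q \<in> L n" "infdist p (L n) = dist p q"
          using infdist_attains_inf[OF compact_imp_closed[OF Ln(1)] Ln(2)] by blast
        obtain i y where iy: "i < N" "y \<in> L n" "q = usc_map k (c' n) i y" using q(1) Ln(3) by blast
        obtain z where z: "z \<in> K" "infdist y K = dist y z"
          using infdist_attains_inf[OF compact_imp_closed[OF K(1)] K(2)] by blast
        have "usc_map k d i z \<in> U" unfolding U_def using iy(1) z(1) by blast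
        then have "infdist p U \<le> dist p (usc_map k d i z)" by (rule infdist_le)
        also have "\<dots> \<le> dist p q + dist q (usc_map k d i z)" by (rule dist_triangle)
        also have "dist q (usc_map k d i z) \<le> dist y z / real k + dist (c' n i) (d i)"
          using iy(3) usc_dist by simp
        also have "dist y z / real k \<le> dist y z"
          using k by (intro div_le_self_real) auto
        finally have "infdist p U \<le> dist p q + dist y z + dist (c' n i) (d i)" by simp
        moreover have "dist p q \<le> hausdist (L n) K" using hd_ge2[OF K(1) p, of "L n"] q(2) by simp
        moreover have "dist y z \<le> hausdist (L n) K" using hd_ge1[OF Ln(1) iy(2), of K] z(2) by simp
        ultimately show ?thesis unfolding b_def using cd[OF iy(1), of n] by linarith
      qed
      have "infdist p U \<le> 0" using bound by (intro LIMSEQ_le_const[OF b]) auto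
      then have "infdist p U = 0" using infdist_nonneg[of p U] by linarith
      moreover have "U \<noteq> {}"
      proof -
        obtain a where "a \<in> L 0" using Ln(2) by blast
        then obtain i where "i < N" using Ln(3)[of 0] by blast
        then have "usc_map k d i p \<in> U" unfolding U_def using p by blast
        then show ?thesis by blast
      qed
      ultimately show "p \<in> (\<Union>i<N. usc_map k d i ` K)"
        using in_closed_iff_infdist_zero[OF compact_imp_closed[OF U]] unfolding U_def by blast
    qed
  next
    show "(\<Union>i<N. usc_map k d i ` K) \<subseteq> K"
    proof
      fix p assume "p \<in> (\<Union>i<N. usc_map k d i ` K)"
      then obtain i z where iz: "i < N" "z \<in> K" "p = usc_map k d i z" by blast
      have bound: "infdist p K \<le> b n" for n
      proof -
        obtain y where y: "y \<in> L n" "infdist z (L n) = dist z y"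
          using infdist_attains_inf[OF compact_imp_closed[OF Ln(1)] Ln(2)] by blast
        define q where "q = usc_map k (c' n) i y"
        have qL: "q \<in> L n" unfolding q_def using y(1) iz(1) Ln(3)[of n] by blast
        obtain w where w: "w \<in> K" "infdist q K = dist q w"
          using infdist_attains_inf[OF compact_imp_closed[OF K(1)] K(2)] by blast
        have "infdist p K \<le> dist p w" using w(1) by (rule infdist_le)
        also have "\<dots> \<le> dist p q + dist q w" by (rule dist_triangle)
        also have "dist p q \<le> dist z y / real k + dist (d i) (c' n i)"
          unfolding q_def iz(3) by (rule usc_dist)
        also have "dist z y / real k \<le> dist z y"
          using k by (intro div_le_self_real) auto
        finally have "infdist p K \<le> dist z y + dist (c' n i) (d i) + dist q w" by (simp add: dist_commute)
        moreover have "dist z y \<le> hausdist (L n) K" using hd_ge2[OF K(1) iz(2), of "L n"] y(2) by simp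
        moreover have "dist q w \<le> hausdist (L n) K" using hd_ge1[OF Ln(1) qL, of K] w(2) by simp
        ultimately show ?thesis unfolding b_def using cd[OF iz(1), of n] by linarith
      qed
      have "infdist p K \<le> 0" using bound by (intro LIMSEQ_le_const[OF b]) auto
      then have "infdist p K = 0" using infdist_nonneg[of p K] by linarith
      then show "p \<in> K" using in_closed_iff_infdist_zero[OF compact_imp_closed[OF K(1)] K(2)] by blast
    qed
  qed
qed

lemma eval0_tendsto:
  assumes "(\<lambda>n. usc_map k (cn n) i) \<longlonglongrightarrow> usc_map k c i"
  shows "(\<lambda>n. cn n i) \<longlonglongrightarrow> c i"
proof -
  have "(\<lambda>n. (\<lambda>f. f 0) (usc_map k (cn n) i)) \<longlonglongrightarrow> (\<lambda>f. f 0) (usc_map k c i)"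
    by (rule continuous_on_tendsto_compose[OF continuous_on_product_coordinates assms]) auto
  then show ?thesis by (simp add: usc_map_eq)
qed

lemma map_tendsto:
  assumes "(\<lambda>n. a n) \<longlonglongrightarrow> b"
  shows "(\<lambda>n. usc_map k (\<lambda>_. a n) 0) \<longlonglongrightarrow> usc_map k (\<lambda>_. b) 0"
proof -
  define F :: "pt \<Rightarrow> pt \<Rightarrow> pt" where "F t = (\<lambda>x. (1/real k) *\<^sub>R x + t)" for t
  have "continuous_on UNIV F" unfolding F_def
    by (intro continuous_on_coordinatewise_then_product continuous_intros)
  then have "(\<lambda>n. F (a n)) \<longlonglongrightarrow> F b"
    by (rule continuous_on_tendsto_compose[OF _ assms]) auto
  moreover have "usc_map k (\<lambda>_. t) 0 = F t" for t unfolding F_def usc_map_def by simp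
  ultimately show ?thesis by simp
qed

lemma partA:
  fixes k N :: nat and c :: "nat \<Rightarrow> pt" and cn :: "nat \<Rightarrow> nat \<Rightarrow> pt"
    and K :: "pt set" and Kn :: "nat \<Rightarrow> pt set"
  assumes "usc_ifs k N c" and "usc_attractor k N c K"
    and hn: "\<And>n. n \<ge> 1 \<Longrightarrow> usc_ifs k N (cn n) \<and> usc_attractor k N (cn n) (Kn n)"
    and conv: "\<forall>i<N. (\<lambda>n. usc_map k (cn n) i) \<longlonglongrightarrow> usc_map k c i"
  shows "(\<lambda>n. hausdist (Kn n) K) \<longlonglongrightarrow> 0"
proof -
  have k: "k \<ge> 3" using ifs_k[OF assms(1)] by auto
  have cc: "(\<lambda>n. cn n i) \<longlonglongrightarrow> c i" if "i < N" for i
    using conv that eval0_tendsto by blast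
  define e where "e n = (real k / (real k - 1)) * (\<Sum>i<N. dist (cn n i) (c i))" for n
  have e: "e \<longlonglongrightarrow> 0"
  proof -
    have "(\<lambda>n. (real k / (real k - 1)) * (\<Sum>i<N. dist (cn n i) (c i))) \<longlonglongrightarrow> (real k / (real k - 1)) * (\<Sum>i<N. 0)"
      by (intro tendsto_mult tendsto_const tendsto_sum)
         (use cc in \<open>auto simp: tendsto_dist_iff[symmetric]\<close>)
    then show ?thesis unfolding e_def by simp
  qed
  show ?thesis
  proof (rule tendsto_sandwich[OF _ _ tendsto_const e])
    show "\<forall>\<^sub>F n in sequentially. 0 \<le> hausdist (Kn n) K"
      unfolding eventually_sequentially
    proof (intro exI allI impI)
      fix n :: nat assume "1 \<le> n"
      then have "usc_attractor k N (cn n) (Kn n)" using hn by blast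
      then have "compact (Kn n)" "Kn n \<noteq> {}" unfolding usc_attractor_def by auto
      then obtain a where "a \<in> Kn n" by blast
      then show "0 \<le> hausdist (Kn n) K" using hd_ge1[OF \<open>compact (Kn n)\<close>] infdist_nonneg order_trans by blast
    qed
    show "\<forall>\<^sub>F n in sequentially. hausdist (Kn n) K \<le> e n"
      unfolding eventually_sequentially
    proof (intro exI allI impI)
      fix n :: nat assume "1 \<le> n"
      then have "usc_attractor k N (cn n) (Kn n)" using hn by blast
      then show "hausdist (Kn n) K \<le> e n" unfolding e_def using attr_close[OF assms(2)] k by simp
    qed
  qed
qed

lemma partB:
  fixes k N :: nat and c :: "nat \<Rightarrow> pt" and cn :: "nat \<Rightarrow> nat \<Rightarrow> pt"
    and K :: "pt set" and Kn :: "nat \<Rightarrow> pt set"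
  assumes ifs: "usc_ifs k N c" and att: "usc_attractor k N c K"
    and hn: "\<And>n. n \<ge> 1 \<Longrightarrow> usc_ifs k N (cn n) \<and> usc_attractor k N (cn n) (Kn n)"
    and hd: "(\<lambda>n. hausdist (Kn n) K) \<longlonglongrightarrow> 0"
  shows "\<exists>\<sigma>. (\<forall>n. \<sigma> n permutes {..<N}) \<and>
                 (\<forall>i<N. (\<lambda>n. usc_map k (cn n) (\<sigma> n i)) \<longlonglongrightarrow> usc_map k c i)"
proof -
  have k: "k \<ge> 3" using ifs_k[OF ifs] by auto
  define P where "P = {p. p permutes {..<N}}"
  have finP: "finite P" unfolding P_def by (rule finite_permutations) simp
  have idP: "id \<in> P" unfolding P_def by (simp add: permutes_id)
  define S where "S n p = (\<Sum>i<N. dist (cn n (p i)) (c i))" for n p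
  define \<delta> where "\<delta> n = Min (S n ` P)" for n
  have \<delta>in: "\<delta> n \<in> S n ` P" for n unfolding \<delta>_def using finP idP by (intro Min_in) auto
  have \<delta>le: "\<delta> n \<le> S n p" if "p \<in> P" for n p unfolding \<delta>_def using finP that by (intro Min_le) auto
  define \<sigma> where "\<sigma> n = (SOME p. p \<in> P \<and> S n p = \<delta> n)" for n
  have \<sigma>: "\<sigma> n \<in> P \<and> S n (\<sigma> n) = \<delta> n" for n
    unfolding \<sigma>_def using \<delta>in[of n] by (intro someI_ex[where P="\<lambda>p. p \<in> P \<and> S n p = \<delta> n"]) auto
  have \<delta>nn: "\<delta> n \<ge> 0" for n using \<delta>in[of n] unfolding S_def by (force intro: sum_nonneg)
  have \<delta>0: "\<delta> \<longlonglongrightarrow> 0"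
  proof (rule ccontr)
    assume "\<not> \<delta> \<longlonglongrightarrow> 0"
    then obtain \<epsilon> :: real where \<epsilon>: "\<epsilon> > 0" "\<not> (\<forall>\<^sub>F n in sequentially. dist (\<delta> n) 0 < \<epsilon>)"
      using tendsto_iff by blast
    define T where "T = {n. 1 \<le> n \<and> \<epsilon> \<le> \<delta> n}"
    have "infinite T" unfolding infinite_nat_iff_unbounded_le
    proof
      fix m
      from \<epsilon>(2) have "\<not> (\<exists>M. \<forall>n\<ge>M. dist (\<delta> n) 0 < \<epsilon>)" unfolding eventually_sequentially by blast
      then obtain n where "n \<ge> max m 1" "\<not> dist (\<delta> n) 0 < \<epsilon>" by blast
      then show "\<exists>n\<ge>m. n \<in> T" unfolding T_def using \<delta>nn[of n] by auto
    qed
    then obtain r0 :: "nat \<Rightarrow> nat" where r0: "strict_mono r0" "\<And>n. r0 n \<in> T"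
      using infinite_enumerate by blast
    have r01: "r0 n \<ge> 1" for n using r0(2)[of n] unfolding T_def by auto
    have inS: "cn (r0 n) i \<in> unit_square" if "i < N" for n i
    proof -
      have "0 \<le> 1 / real k" by simp
      moreover note ifs_bounds[OF conjunct1[OF hn[OF r01[of n]]] that]
      ultimately show ?thesis unfolding unit_square_mem by linarith
    qed
    have "compact unit_square" unfolding unit_square_def by simp
    from subseq_all[where f="\<lambda>n i. cn (r0 n) i" and M=N, OF this inS] obtain r1 d where r1: "strict_mono r1"
      and cd0: "\<forall>i<N. (\<lambda>n. cn (r0 (r1 n)) i) \<longlonglongrightarrow> d i" by blast
    define r where "r = r0 \<circ> r1"
    have rT: "r n \<in> T" for n unfolding r_def using r0(2) by simp
    have r1n: "r n \<ge> 1" for n using rT[of n] unfolding T_def by auto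
    have rmono: "strict_mono r" unfolding r_def using r0(1) r1 by (rule strict_mono_o)
    have cd: "(\<lambda>n. cn (r n) i) \<longlonglongrightarrow> d i" if "i < N" for i using cd0 that unfolding r_def by simp
    have hdr: "(\<lambda>n. hausdist (Kn (r n)) K) \<longlonglongrightarrow> 0"
      using LIMSEQ_subseq_LIMSEQ[OF hd rmono] by (simp add: o_def)
    have ifsr: "usc_ifs k N (cn (r n))" and attr: "usc_attractor k N (cn (r n)) (Kn (r n))" for n
      using hn[OF r1n[of n]] by auto
    have Kc: "compact K" "K \<noteq> {}" and eqc: "K = (\<Union>i<N. usc_map k c i ` K)"
      using att unfolding usc_attractor_def by auto
    have eqd: "K = (\<Union>i<N. usc_map k d i ` K)"
      by (rule hd_limit_eq[OF Kc _ attr hdr cd]) (use k in auto)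
    have sepd: "1/real k \<le> \<bar>fst (d i) - fst (d j)\<bar> \<or> 1/real k \<le> \<bar>snd (d i) - snd (d j)\<bar>"
      if ij: "i < N" "j < N" "i \<noteq> j" for i j
    proof (rule ccontr)
      assume "\<not> ?thesis"
      then have lt: "\<bar>fst (d i) - fst (d j)\<bar> < 1/real k" "\<bar>snd (d i) - snd (d j)\<bar> < 1/real k" by auto
      have t1: "(\<lambda>n. \<bar>fst (cn (r n) i) - fst (cn (r n) j)\<bar>) \<longlonglongrightarrow> \<bar>fst (d i) - fst (d j)\<bar>"
        by (intro tendsto_intros cd ij)
      have t2: "(\<lambda>n. \<bar>snd (cn (r n) i) - snd (cn (r n) j)\<bar>) \<longlonglongrightarrow> \<bar>snd (d i) - snd (d j)\<bar>"
        by (intro tendsto_intros cd ij)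
      have "\<forall>\<^sub>F n in sequentially. \<bar>fst (cn (r n) i) - fst (cn (r n) j)\<bar> < 1/real k \<and> \<bar>snd (cn (r n) i) - snd (cn (r n) j)\<bar> < 1/real k"
        using order_tendstoD(2)[OF t1 lt(1)] order_tendstoD(2)[OF t2 lt(2)] by (rule eventually_conj)
      then obtain n where "\<bar>fst (cn (r n) i) - fst (cn (r n) j)\<bar> < 1/real k" "\<bar>snd (cn (r n) i) - snd (cn (r n) j)\<bar> < 1/real k"
        unfolding eventually_sequentially by blast
      then show False using ifs_sep[OF ifsr[of n] ij] by linarith
    qed
    have kpos: "1/real k > 0" using k by simp
    have injd: "inj_on d {..<N}"
      by (rule inj_onI) (use sepd kpos in fastforce)
    have injc: "inj_on c {..<N}"
      by (rule inj_onI) (use ifs_sep[OF ifs] kpos in fastforce)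
    have mapeq: "usc_map k f i = (\<lambda>y. (1/real k) *\<^sub>R y + f i)" for f i
      by (rule ext) (simp add: usc_map_eq)
    have CD: "c ` {..<N} = d ` {..<N}"
    proof (rule rigid[of "1/real k" K])
      show "0 < 1/real k" "1/real k < 1" using k by auto
      show "K \<subseteq> unit_square" by (rule att_box[OF ifs att])
      show "((1/real k)^m, (1/real k)^m) \<in> K" for m by (rule att_pts[OF ifs att])
      show "finite (c ` {..<N})" "finite (d ` {..<N})" by auto
      show "K = (\<Union>x\<in>c ` {..<N}. (\<lambda>y. (1/real k) *\<^sub>R y + x) ` K)"
        using eqc by (simp add: mapeq)
      show "K = (\<Union>x\<in>d ` {..<N}. (\<lambda>y. (1/real k) *\<^sub>R y + x) ` K)"
        using eqd by (simp add: mapeq)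
      show "\<forall>a\<in>c ` {..<N}. \<forall>b\<in>c ` {..<N}. a \<noteq> b \<longrightarrow> 1/real k \<le> \<bar>fst a - fst b\<bar> \<or> 1/real k \<le> \<bar>snd a - snd b\<bar>"
      proof (intro ballI impI)
        fix a b assume ab: "a \<in> c ` {..<N}" "b \<in> c ` {..<N}" "a \<noteq> b"
        then obtain i j where "i < N" "j < N" "a = c i" "b = c j" by blast
        moreover then have "i \<noteq> j" using ab(3) by blast
        ultimately show "1/real k \<le> \<bar>fst a - fst b\<bar> \<or> 1/real k \<le> \<bar>snd a - snd b\<bar>"
          using ifs_sep[OF ifs] by blast
      qed
      show "\<forall>a\<in>d ` {..<N}. \<forall>b\<in>d ` {..<N}. a \<noteq> b \<longrightarrow> 1/real k \<le> \<bar>fst a - fst b\<bar> \<or> 1/real k \<le> \<bar>snd a - snd b\<bar>"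
      proof (intro ballI impI)
        fix a b assume ab: "a \<in> d ` {..<N}" "b \<in> d ` {..<N}" "a \<noteq> b"
        then obtain i j where "i < N" "j < N" "a = d i" "b = d j" by blast
        moreover then have "i \<noteq> j" using ab(3) by blast
        ultimately show "1/real k \<le> \<bar>fst a - fst b\<bar> \<or> 1/real k \<le> \<bar>snd a - snd b\<bar>"
          using sepd by blast
      qed
    qed
    define \<tau> where "\<tau> i = (if i < N then inv_into {..<N} d (c i) else i)" for i
    have b1: "bij_betw c {..<N} (d ` {..<N})" using injc CD by (simp add: bij_betw_def)
    have b2: "bij_betw (inv_into {..<N} d) (d ` {..<N}) {..<N}" using injd by (rule bij_betw_inv_into[OF inj_on_imp_bij_betw])
    have "bij_betw (inv_into {..<N} d \<circ> c) {..<N} {..<N}" using b1 b2 by (rule bij_betw_trans)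
    moreover have "bij_betw \<tau> {..<N} {..<N} = bij_betw (inv_into {..<N} d \<circ> c) {..<N} {..<N}"
      by (rule bij_betw_cong) (simp add: \<tau>_def)
    ultimately have "bij_betw \<tau> {..<N} {..<N}" by simp
    then have \<tau>P: "\<tau> \<in> P" unfolding P_def by (intro CollectI bij_imp_permutes) (simp_all add: \<tau>_def)
    have d\<tau>: "d (\<tau> i) = c i" "\<tau> i < N" if "i < N" for i
    proof -
      have "c i \<in> d ` {..<N}" using CD that by blast
      then show "d (\<tau> i) = c i" using that by (simp add: \<tau>_def f_inv_into_f)
      show "\<tau> i < N" using inv_into_into[OF \<open>c i \<in> d ` {..<N}\<close>] that by (simp add: \<tau>_def)
    qed
    have tdist: "(\<lambda>n. dist (cn (r n) (\<tau> i)) (c i)) \<longlonglongrightarrow> 0" if iN: "i < N" for i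
    proof -
      have "(\<lambda>n. cn (r n) (\<tau> i)) \<longlonglongrightarrow> d (\<tau> i)" by (rule cd[OF d\<tau>(2)[OF iN]])
      then have "(\<lambda>n. cn (r n) (\<tau> i)) \<longlonglongrightarrow> c i" by (simp only: d\<tau>(1)[OF iN])
      from tendsto_dist[OF this tendsto_const[of "c i"]] show ?thesis by simp
    qed
    have "(\<lambda>n. \<Sum>i<N. dist (cn (r n) (\<tau> i)) (c i)) \<longlonglongrightarrow> (\<Sum>i<N. (0::real))"
      by (rule tendsto_sum) (use tdist in blast)
    then have lim0: "(\<lambda>n. S (r n) \<tau>) \<longlonglongrightarrow> 0" by (simp add: S_def)
    have "\<forall>\<^sub>F n in sequentially. S (r n) \<tau> < \<epsilon>" by (rule order_tendstoD(2)[OF lim0 \<epsilon>(1)])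
    then obtain n where "S (r n) \<tau> < \<epsilon>" unfolding eventually_sequentially by blast
    moreover have "\<delta> (r n) \<le> S (r n) \<tau>" using \<delta>le[OF \<tau>P] .
    moreover have "\<epsilon> \<le> \<delta> (r n)" using rT[of n] unfolding T_def by auto
    ultimately show False by linarith
  qed
  show ?thesis
  proof (intro exI conjI allI impI)
    fix n show "\<sigma> n permutes {..<N}" using \<sigma>[of n] unfolding P_def by auto
  next
    fix i assume i: "i < N"
    have "(\<lambda>n. dist (cn n (\<sigma> n i)) (c i)) \<longlonglongrightarrow> 0"
    proof (rule tendsto_sandwich[OF _ _ tendsto_const \<delta>0])
      show "\<forall>\<^sub>F n in sequentially. 0 \<le> dist (cn n (\<sigma> n i)) (c i)" by simp
      show "\<forall>\<^sub>F n in sequentially. dist (cn n (\<sigma> n i)) (c i) \<le> \<delta> n"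
      proof (intro always_eventually allI)
        fix n
        have "dist (cn n (\<sigma> n i)) (c i) \<le> S n (\<sigma> n)" unfolding S_def using i
          by (intro member_le_sum[where f="\<lambda>i. dist (cn n (\<sigma> n i)) (c i)"]) auto
        then show "dist (cn n (\<sigma> n i)) (c i) \<le> \<delta> n" using \<sigma>[of n] by simp
      qed
    qed
    then have cnl: "(\<lambda>n. cn n (\<sigma> n i)) \<longlonglongrightarrow> c i" by (rule tendsto_dist_iff[THEN iffD2])
    show "(\<lambda>n. usc_map k (cn n) (\<sigma> n i)) \<longlonglongrightarrow> usc_map k c i"
    proof -
      have eq: "usc_map k f j = usc_map k (\<lambda>_. f j) 0" for f :: "nat \<Rightarrow> pt" and j
        by (rule ext) (simp add: usc_map_eq)
      show ?thesis using map_tendsto[OF cnl, of k] by (simp only: eq[symmetric])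
    qed
  qed
qed

theorem lemma7p2:
  fixes k N :: nat and c :: "nat \<Rightarrow> pt" and cn :: "nat \<Rightarrow> nat \<Rightarrow> pt"
    and K :: "pt set" and Kn :: "nat \<Rightarrow> pt set"
  assumes "usc_ifs k N c" and "usc_attractor k N c K"
    and "\<And>n. n \<ge> 1 \<Longrightarrow> usc_ifs k N (cn n) \<and> usc_attractor k N (cn n) (Kn n)"
  shows "((\<forall>i<N. (\<lambda>n. usc_map k (cn n) i) \<longlonglongrightarrow> usc_map k c i)
            \<longrightarrow> (\<lambda>n. hausdist (Kn n) K) \<longlonglongrightarrow> 0)
       \<and> ((\<lambda>n. hausdist (Kn n) K) \<longlonglongrightarrow> 0
            \<longrightarrow> (\<exists>\<sigma>. (\<forall>n. \<sigma> n permutes {..<N}) \<and>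
                 (\<forall>i<N. (\<lambda>n. usc_map k (cn n) (\<sigma> n i)) \<longlonglongrightarrow> usc_map k c i)))"
  using partA[of k N c K cn Kn, OF assms] partB[of k N c K cn Kn, OF assms] by blast

end
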